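(* Let $(E,p,X)$ and $(F,q,Y)$ be étalé spaces over Boolean spaces and let $\varphi\colon(E,p,X)\to(F,q,Y)$ be a proper continuous relational covering morphism with underlying map $\overline{\varphi}\colon X\to Y$. Then $\overline{\varphi}$ is a proper continuous map of topological spaces.
   Context: A Boolean space is a Hausdorff space with a basis of compact-open sets. An étalé space $(E,p,X)$: topological spaces $E,X$ with a surjective local homeomorphism $p\colon E\to X$. Stalk: $F_y=q^{-1}(y)$. A relational morphism $\varphi\colon(E,p,X)\to(F,q,Y)$ is a map $\varphi\colon E\to\mathsf P(F)$ together with a map $\overline{\varphi}\colon X\to Y$ such that $\varphi(e)\subseteq F_{\overline{\varphi}(p(e))}$ for all $e\in E$. It is locally injective if $p(e)=p(e')$ and $\varphi(e)\cap\varphi(e')\neq\emptyset$ imply $e=e'$; locally surjective if whenever $y\in F$ with $q(y)=\overline{\varphi}(u)$ for some $u\in X$, there is $e\in E$ with $p(e)=u$ and $y\in\varphi(e)$; a relational covering morphism if both. With $\varphi^{-1}(A)=\{e\in E:\varphi(e)\cap A\neq\emptyset\}$, $\varphi$ is continuous if $\varphi^{-1}(A)$ is open for all open $A\subseteq F$ and proper if $\varphi^{-1}(K)$ is compact for all compact $K\subseteq F$. A continuous map is proper if inverse images of compact sets are compact. *)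

theory Defs
  imports "HOL-Analysis.Analysis"
begin

definition boolean_space :: "'a topology \<Rightarrow> bool" where
  "boolean_space X \<longleftrightarrow> Hausdorff_space X \<and>
     (\<exists>\<B>. (\<forall>B\<in>\<B>. openin X B \<and> compactin X B) \<and>
          (\<forall>U x. openin X U \<and> x \<in> U \<longrightarrow> (\<exists>B\<in>\<B>. x \<in> B \<and> B \<subseteq> U)))"

definition local_homeomorphism :: "'a topology \<Rightarrow> 'b topology \<Rightarrow> ('a \<Rightarrow> 'b) \<Rightarrow> bool" where
  "local_homeomorphism E X p \<longleftrightarrow> continuous_map E X p \<and>
     (\<forall>e\<in>topspace E. \<exists>U. openin E U \<and> e \<in> U \<and> openin X (p ` U) \<and>
          homeomorphic_map (subtopology E U) (subtopology X (p ` U)) p)"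

definition etale_space :: "'a topology \<Rightarrow> ('a \<Rightarrow> 'b) \<Rightarrow> 'b topology \<Rightarrow> bool" where
  "etale_space E p X \<longleftrightarrow> local_homeomorphism E X p \<and> p ` topspace E = topspace X"

definition stalk :: "'a topology \<Rightarrow> ('a \<Rightarrow> 'b) \<Rightarrow> 'b \<Rightarrow> 'a set" where
  "stalk F q y = {f \<in> topspace F. q f = y}"

definition relational_morphism ::
  "'e topology \<Rightarrow> ('e \<Rightarrow> 'x) \<Rightarrow> 'x topology \<Rightarrow>
   'f topology \<Rightarrow> ('f \<Rightarrow> 'y) \<Rightarrow> 'y topology \<Rightarrow>
   ('e \<Rightarrow> 'f set) \<Rightarrow> ('x \<Rightarrow> 'y) \<Rightarrow> bool" where
  "relational_morphism E p X F q Y \<phi> \<phi>b \<longleftrightarrow>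
     \<phi>b ` topspace X \<subseteq> topspace Y \<and>
     (\<forall>e\<in>topspace E. \<phi> e \<subseteq> stalk F q (\<phi>b (p e)))"

definition rel_locally_injective ::
  "'e topology \<Rightarrow> ('e \<Rightarrow> 'x) \<Rightarrow> ('e \<Rightarrow> 'f set) \<Rightarrow> bool" where
  "rel_locally_injective E p \<phi> \<longleftrightarrow>
     (\<forall>e\<in>topspace E. \<forall>e'\<in>topspace E.
        p e = p e' \<and> \<phi> e \<inter> \<phi> e' \<noteq> {} \<longrightarrow> e = e')"

definition rel_locally_surjective ::
  "'e topology \<Rightarrow> ('e \<Rightarrow> 'x) \<Rightarrow> 'x topology \<Rightarrow> 'f topology \<Rightarrow> ('f \<Rightarrow> 'y) \<Rightarrow>
   ('e \<Rightarrow> 'f set) \<Rightarrow> ('x \<Rightarrow> 'y) \<Rightarrow> bool" where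
  "rel_locally_surjective E p X F q \<phi> \<phi>b \<longleftrightarrow>
     (\<forall>y\<in>topspace F. \<forall>u\<in>topspace X. q y = \<phi>b u \<longrightarrow>
        (\<exists>e\<in>topspace E. p e = u \<and> y \<in> \<phi> e))"

definition relational_covering_morphism ::
  "'e topology \<Rightarrow> ('e \<Rightarrow> 'x) \<Rightarrow> 'x topology \<Rightarrow>
   'f topology \<Rightarrow> ('f \<Rightarrow> 'y) \<Rightarrow> 'y topology \<Rightarrow>
   ('e \<Rightarrow> 'f set) \<Rightarrow> ('x \<Rightarrow> 'y) \<Rightarrow> bool" where
  "relational_covering_morphism E p X F q Y \<phi> \<phi>b \<longleftrightarrow>
     relational_morphism E p X F q Y \<phi> \<phi>b \<and>
     rel_locally_injective E p \<phi> \<and> rel_locally_surjective E p X F q \<phi> \<phi>b"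

definition rel_preimage :: "'e topology \<Rightarrow> ('e \<Rightarrow> 'f set) \<Rightarrow> 'f set \<Rightarrow> 'e set" where
  "rel_preimage E \<phi> A = {e \<in> topspace E. \<phi> e \<inter> A \<noteq> {}}"

definition rel_continuous :: "'e topology \<Rightarrow> 'f topology \<Rightarrow> ('e \<Rightarrow> 'f set) \<Rightarrow> bool" where
  "rel_continuous E F \<phi> \<longleftrightarrow> (\<forall>A. openin F A \<longrightarrow> openin E (rel_preimage E \<phi> A))"

definition rel_proper :: "'e topology \<Rightarrow> 'f topology \<Rightarrow> ('e \<Rightarrow> 'f set) \<Rightarrow> bool" where
  "rel_proper E F \<phi> \<longleftrightarrow> (\<forall>K. compactin F K \<longrightarrow> compactin E (rel_preimage E \<phi> K))"

text \<open>Proper map in the paper's sense: preimages of compact sets are compact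
  (not the library's proper_map, which is closed + compact fibres).\<close>
definition compact_preimage_map :: "'a topology \<Rightarrow> 'b topology \<Rightarrow> ('a \<Rightarrow> 'b) \<Rightarrow> bool" where
  "compact_preimage_map X Y f \<longleftrightarrow>
     (\<forall>K. compactin Y K \<longrightarrow> compactin X {x \<in> topspace X. f x \<in> K})"

end

theory Submission
  imports Defs
begin

lemma lh_open_map:
  assumes "local_homeomorphism E X p" "openin E W"
  shows "openin X (p ` W)"
proof -
  have "\<forall>e\<in>W. \<exists>U. openin E U \<and> e \<in> U \<and> openin X (p ` U) \<and>
          homeomorphic_map (subtopology E U) (subtopology X (p ` U)) p"
    using assms openin_subset unfolding local_homeomorphism_def by blast
  then obtain U where U: "\<And>e. e\<in>W \<Longrightarrow> openin E (U e) \<and> e \<in> U e \<and> openin X (p ` U e) \<and>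
          homeomorphic_map (subtopology E (U e)) (subtopology X (p ` U e)) p"
    by (elim bchoice[elim_format]) blast
  have "p ` W = (\<Union>e\<in>W. p ` (W \<inter> U e))" using U by blast
  moreover have "openin X (p ` (W \<inter> U e))" if "e \<in> W" for e
  proof -
    have "openin (subtopology E (U e)) (W \<inter> U e)"
      using assms(2) by (simp add: openin_subtopology_Int)
    then have "openin (subtopology X (p ` U e)) (p ` (W \<inter> U e))"
      using U[OF that] homeomorphic_imp_open_map unfolding open_map_def by blast
    then show ?thesis using U[OF that] openin_trans_full by blast
  qed
  ultimately show ?thesis by auto
qed

lemma piece:
  assumes "local_homeomorphism F Y q" "Hausdorff_space Y" "compactin Y K"
    and "openin F U" "homeomorphic_map (subtopology F U) (subtopology Y (q ` U)) q"
    and "compactin Y B" "B \<subseteq> q ` U"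
  shows "\<exists>C. compactin F C \<and> C \<subseteq> {f\<in>topspace F. q f \<in> K} \<and> K \<inter> B \<subseteq> q ` C"
proof -
  obtain g where g: "homeomorphic_maps (subtopology F U) (subtopology Y (q ` U)) q g"
    using assms(5) homeomorphic_map_maps by blast
  have KB: "compactin Y (K \<inter> B)"
    using closed_Int_compactin[OF compactin_imp_closedin[OF assms(2,3)] assms(6)] .
  then have "compactin (subtopology Y (q ` U)) (K \<inter> B)"
    using assms(7) compactin_subtopology by blast
  then have c: "compactin (subtopology F U) (g ` (K \<inter> B))"
    using g image_compactin unfolding homeomorphic_maps_def by blast
  have sub: "K \<inter> B \<subseteq> topspace (subtopology Y (q ` U))"
    using KB assms(7) compactin_subset_topspace by fastforce
  show ?thesis
  proof (intro exI conjI)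
    show "compactin F (g ` (K \<inter> B))" using c compactin_subtopology by blast
    show "g ` (K \<inter> B) \<subseteq> {f \<in> topspace F. q f \<in> K}"
    proof
      fix f assume "f \<in> g ` (K \<inter> B)"
      then obtain y where y: "y \<in> K \<inter> B" "f = g y" by blast
      then have "q f = y" using g sub unfolding homeomorphic_maps_def by blast
      moreover have "f \<in> topspace F" using c y compactin_subset_topspace by fastforce
      ultimately show "f \<in> {f \<in> topspace F. q f \<in> K}" using y by auto
    qed
    show "K \<inter> B \<subseteq> q ` g ` (K \<inter> B)"
    proof
      fix y assume "y \<in> K \<inter> B"
      then have "q (g y) = y" using g sub unfolding homeomorphic_maps_def by blast
      then show "y \<in> q ` g ` (K \<inter> B)" using \<open>y \<in> K \<inter> B\<close> by (metis image_eqI)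
    qed
  qed
qed

theorem lemma1p12:
  fixes E :: "'e topology" and X :: "'x topology" and p :: "'e \<Rightarrow> 'x"
    and F :: "'f topology" and Y :: "'y topology" and q :: "'f \<Rightarrow> 'y"
    and \<phi> :: "'e \<Rightarrow> 'f set" and \<phi>b :: "'x \<Rightarrow> 'y"
  assumes "boolean_space X" and "boolean_space Y"
    and "etale_space E p X" and "etale_space F q Y"
    and "relational_covering_morphism E p X F q Y \<phi> \<phi>b"
    and "rel_continuous E F \<phi>" and "rel_proper E F \<phi>"
  shows "continuous_map X Y \<phi>b \<and> compact_preimage_map X Y \<phi>b"
proof -
  have lhE: "local_homeomorphism E X p" and surE: "p ` topspace E = topspace X"
    using assms(3) unfolding etale_space_def by auto
  have lhF: "local_homeomorphism F Y q" and surF: "q ` topspace F = topspace Y"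
    using assms(4) unfolding etale_space_def by auto
  have cp: "continuous_map E X p" using lhE local_homeomorphism_def by blast
  have cq: "continuous_map F Y q" using lhF local_homeomorphism_def by blast
  have img: "\<phi>b ` topspace X \<subseteq> topspace Y"
    and stk: "\<And>e. e \<in> topspace E \<Longrightarrow> \<phi> e \<subseteq> stalk F q (\<phi>b (p e))"
    and ls: "\<And>y u. y \<in> topspace F \<Longrightarrow> u \<in> topspace X \<Longrightarrow> q y = \<phi>b u \<Longrightarrow>
        (\<exists>e\<in>topspace E. p e = u \<and> y \<in> \<phi> e)"
    using assms(5) unfolding relational_covering_morphism_def relational_morphism_def
      rel_locally_surjective_def by blast+
  have key: "p ` rel_preimage E \<phi> C = {x \<in> topspace X. \<phi>b x \<in> S}"
    if h1: "C \<subseteq> {f\<in>topspace F. q f \<in> S}" and h2: "S \<inter> \<phi>b ` topspace X \<subseteq> q ` C" for C S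
  proof
    show "p ` rel_preimage E \<phi> C \<subseteq> {x \<in> topspace X. \<phi>b x \<in> S}"
    proof
      fix x assume "x \<in> p ` rel_preimage E \<phi> C"
      then obtain e f where e: "e \<in> topspace E" "x = p e" "f \<in> \<phi> e" "f \<in> C"
        unfolding rel_preimage_def by blast
      then have "q f = \<phi>b (p e)" using stk[OF e(1)] unfolding stalk_def by blast
      then show "x \<in> {x \<in> topspace X. \<phi>b x \<in> S}"
        using e h1 surE by auto
    qed
    show "{x \<in> topspace X. \<phi>b x \<in> S} \<subseteq> p ` rel_preimage E \<phi> C"
    proof
      fix x assume x: "x \<in> {x \<in> topspace X. \<phi>b x \<in> S}"
      then obtain f where f: "f \<in> C" "q f = \<phi>b x" using h2 by force
      then have "f \<in> topspace F" using h1 by blast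
      then obtain e where "e \<in> topspace E" "p e = x" "f \<in> \<phi> e" using ls f x by force
      then show "x \<in> p ` rel_preimage E \<phi> C" using f unfolding rel_preimage_def by blast
    qed
  qed
  have cont: "continuous_map X Y \<phi>b"
    unfolding continuous_map_def
  proof (intro conjI allI impI)
    show "\<phi>b \<in> topspace X \<rightarrow> topspace Y" using img by blast
    fix V assume V: "openin Y V"
    let ?C = "{f\<in>topspace F. q f \<in> V}"
    have "openin F ?C" using V cq openin_continuous_map_preimage by blast
    then have "openin E (rel_preimage E \<phi> ?C)" using assms(6) rel_continuous_def by blast
    then have o: "openin X (p ` rel_preimage E \<phi> ?C)" using lhE lh_open_map by blast
    have "V \<inter> \<phi>b ` topspace X \<subseteq> q ` ?C" 
    proof
      fix y assume y: "y \<in> V \<inter> \<phi>b ` topspace X"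
      then have "y \<in> topspace Y" using img by blast
      then obtain f where "f \<in> topspace F" "q f = y" using surF by (metis imageE)
      then show "y \<in> q ` ?C" using y by blast
    qed
    then have "p ` rel_preimage E \<phi> ?C = {x \<in> topspace X. \<phi>b x \<in> V}"
      using key by blast
    then show "openin X {x \<in> topspace X. \<phi>b x \<in> V}" using o by simp
  qed
  have prp: "compact_preimage_map X Y \<phi>b"
    unfolding compact_preimage_map_def
  proof (intro allI impI)
    fix K assume K: "compactin Y K"
    have hY: "Hausdorff_space Y" using assms(2) unfolding boolean_space_def by (elim conjE)
    obtain \<B> where B0: "\<forall>B\<in>\<B>. openin Y B \<and> compactin Y B"
      "\<forall>U x. openin Y U \<and> x \<in> U \<longrightarrow> (\<exists>B\<in>\<B>. x \<in> B \<and> B \<subseteq> U)"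
      using assms(2) unfolding boolean_space_def by (elim conjE exE) (rule that)
    have B: "\<forall>B\<in>\<B>. openin Y B \<and> compactin Y B"
      "\<And>U x. openin Y U \<Longrightarrow> x \<in> U \<Longrightarrow> (\<exists>B\<in>\<B>. x \<in> B \<and> B \<subseteq> U)"
      using B0 by blast+
    define \<U> where "\<U> = {B\<in>\<B>. \<exists>U. openin F U \<and>
         homeomorphic_map (subtopology F U) (subtopology Y (q ` U)) q \<and> B \<subseteq> q ` U}"
    have cov: "K \<subseteq> \<Union>\<U>"
    proof
      fix y assume "y \<in> K"
      then have "y \<in> topspace Y" using K compactin_subset_topspace by blast
      then obtain f where f: "f \<in> topspace F" "q f = y" using surF by force
      then obtain U where U: "openin F U" "f \<in> U" "openin Y (q ` U)"
        "homeomorphic_map (subtopology F U) (subtopology Y (q ` U)) q"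
        using lhF unfolding local_homeomorphism_def by blast
      then obtain B where "B \<in> \<B>" "y \<in> B" "B \<subseteq> q ` U" using B(2) f by blast
      then show "y \<in> \<Union>\<U>" using U unfolding \<U>_def by blast
    qed
    have "\<forall>B\<in>\<U>. openin Y B" using B(1) \<U>_def by blast
    then obtain \<G> where G: "finite \<G>" "\<G> \<subseteq> \<U>" "K \<subseteq> \<Union>\<G>"
      using K cov unfolding compactin_def by (elim conjE allE[of _ \<U>]) blast
    have "\<forall>B\<in>\<G>. \<exists>C. compactin F C \<and> C \<subseteq> {f\<in>topspace F. q f \<in> K} \<and> K \<inter> B \<subseteq> q ` C"
    proof
      fix B assume "B \<in> \<G>"
      then have "B \<in> \<U>" using G by blast
      then obtain U where "openin F U" "homeomorphic_map (subtopology F U) (subtopology Y (q ` U)) q"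
        "compactin Y B" "B \<subseteq> q ` U" using B(1) unfolding \<U>_def by blast
      then show "\<exists>C. compactin F C \<and> C \<subseteq> {f\<in>topspace F. q f \<in> K} \<and> K \<inter> B \<subseteq> q ` C"
        by (rule piece[OF lhF hY K])
    qed
    then have "\<exists>Cf. \<forall>B\<in>\<G>. compactin F (Cf B) \<and>
        Cf B \<subseteq> {f\<in>topspace F. q f \<in> K} \<and> K \<inter> B \<subseteq> q ` Cf B"
      by (rule bchoice)
    then obtain Cf where Cf0: "\<forall>B\<in>\<G>. compactin F (Cf B) \<and>
        Cf B \<subseteq> {f\<in>topspace F. q f \<in> K} \<and> K \<inter> B \<subseteq> q ` Cf B" ..
    have Cf: "\<And>B. B\<in>\<G> \<Longrightarrow> compactin F (Cf B)"
      "\<And>B. B\<in>\<G> \<Longrightarrow> Cf B \<subseteq> {f\<in>topspace F. q f \<in> K}"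
      "\<And>B. B\<in>\<G> \<Longrightarrow> K \<inter> B \<subseteq> q ` Cf B" using Cf0 by blast+
    let ?C = "\<Union>(Cf ` \<G>)"
    have cC: "compactin F ?C" using Cf(1) G(1) by (intro compactin_Union) auto
    have s1: "?C \<subseteq> {f\<in>topspace F. q f \<in> K}" using Cf(2) by blast
    have s2: "K \<inter> \<phi>b ` topspace X \<subseteq> q ` ?C"
    proof
      fix y assume "y \<in> K \<inter> \<phi>b ` topspace X"
      then obtain B where "B \<in> \<G>" "y \<in> K \<inter> B" using G(3) by blast
      then have "y \<in> q ` Cf B" using Cf(3) by blast
      then show "y \<in> q ` ?C" using \<open>B \<in> \<G>\<close> by blast
    qed
    have "compactin E (rel_preimage E \<phi> ?C)" using assms(7) cC rel_proper_def by blast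
    then have "compactin X (p ` rel_preimage E \<phi> ?C)" using cp image_compactin by blast
    then show "compactin X {x \<in> topspace X. \<phi>b x \<in> K}" using key[OF s1 s2] by simp
  qed
  show ?thesis using cont prp by blast
qed

end
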